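(* There is an equality $(\Theta\otimes\mathbb C)\setminus\mathcal H_{\mathbb C}=\bigcup_{L\in\operatorname{Mut}_0(N)}\varphi_L(\mathbb H_+)$, and the union on the right is disjoint.
   Context: $R$ is a three-dimensional complete local Gorenstein normal $\mathbb C$-algebra with an isolated cDV singularity; $f\colon X\to\operatorname{Spec}R$ a flopping contraction ($X$ Gorenstein terminal) with $n$ exceptional curves; $N=R\oplus N_1\oplus\dots\oplus N_n$ the push-forward of the standard Van den Bergh tilting bundle. Mutation: for modifying $L=\bigoplus_{j=0}^nL_j$ and index $i$, $\nu_iL$ is the Iyama–Wemyss mutation replacing the $i$th summand; $\operatorname{Mut}_0(N)$ is the set of iterated mutations of $N$ never mutating at index $0$ (where $N_0=R$). For $L\in\operatorname{Mut}_0(N)$, $\mathcal K_L=K_0(\operatorname{per}\operatorname{End}_R(L))=\bigoplus_{j=0}^n\mathbb Z[P_j]$ with $P_j=\operatorname{Hom}_R(L,L_j)$, $\Theta_L=\mathcal K_L/\mathbb Z[P_0]$ with basis $[P_1],\dots,[P_n]$, $\Theta=\Theta_N$. Mutation functors $\mathbf R\operatorname{Hom}(\operatorname{Hom}_R(L,\nu_iL),-)$ for $i\ne0$ induce isomorphisms $\Theta_L\to\Theta_{\nu_iL}$, and $\varphi_L\colon\Theta_L\otimes\mathbb C\to\Theta\otimes\mathbb C$ is induced by a shortest walk from $L$ to $N$ inside $\operatorname{Mut}_0(N)$ (independent of the choice). With $C_+$ the open positive orthant, the cones $\varphi_L(C_+)$, $L\in\operatorname{Mut}_0(N)$, are the chambers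 of a finite simplicial real hyperplane arrangement $\mathcal H$ in $\Theta\otimes\mathbb R$; $\mathcal H_{\mathbb C}=\bigcup_{H\in\mathcal H}H\otimes\mathbb C$. $\mathbb H=\{re^{\mathrm i\pi\theta}:r>0,0<\theta\le1\}$ is the semi-closed upper half plane and $\mathbb H_+=\{z\in\Theta_L\otimes\mathbb C: z_j\in\mathbb H\text{ for all }1\le j\le n\}$. *)

theory Defs
  imports "HOL-Analysis.Analysis"
begin

text \<open>Theta (x) R is modelled as real^'n (coordinates w.r.t. the basis [P_1],...,[P_n]),
  Theta (x) C as complex^'n.  A linear map Theta_L (x) R -> Theta (x) R is given by its
  real matrix; its complexification acts on complex^'n.\<close>

definition complexify :: "real^'n^'n \<Rightarrow> complex^'n \<Rightarrow> complex^'n" where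
  "complexify M z = (\<chi> i. \<Sum>j\<in>UNIV. complex_of_real (M $ i $ j) * z $ j)"

definition pos_orthant :: "(real^'n) set" where
  "pos_orthant = {x. \<forall>j. 0 < x $ j}"

definition semi_upper_half_plane :: "complex set" where
  "semi_upper_half_plane =
     {z. \<exists>r \<theta>. 0 < r \<and> 0 < \<theta> \<and> \<theta> \<le> 1 \<and> z = complex_of_real r * exp (\<i> * complex_of_real (pi * \<theta>))}"

definition H_plus :: "(complex^'n) set" where
  "H_plus = {z. \<forall>j. z $ j \<in> semi_upper_half_plane}"

text \<open>A (central) real hyperplane arrangement is given by a finite set A of nonzero normal
  vectors; the hyperplane of a is {x. a \<bullet> x = 0}.\<close>
definition real_hyperplane :: "real^'n \<Rightarrow> (real^'n) set" where
  "real_hyperplane a = {x. a \<bullet> x = 0}"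

definition complex_hyperplane :: "real^'n \<Rightarrow> (complex^'n) set" where
  "complex_hyperplane a = {z. (\<Sum>j\<in>UNIV. complex_of_real (a $ j) * z $ j) = 0}"

definition chambers :: "(real^'n) set \<Rightarrow> (real^'n) set set" where
  "chambers A = components (UNIV - (\<Union>a\<in>A. real_hyperplane a))"

definition simplicial_arrangement :: "(real^'n) set \<Rightarrow> bool" where
  "simplicial_arrangement A \<longleftrightarrow>
     (\<forall>C\<in>chambers A. \<exists>M::real^'n^'n. invertible M \<and> C = (\<lambda>x. M *v x) ` pos_orthant)"

end

theory Submission imports Defs begin

definition rev :: "complex^'n \<Rightarrow> real^'n" where "rev z = (\<chi> j. Re (z$j))"
definition imv :: "complex^'n \<Rightarrow> real^'n" where "imv z = (\<chi> j. Im (z$j))"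

lemma suhp_iff: "z \<in> semi_upper_half_plane \<longleftrightarrow> 0 < Im z \<or> (Im z = 0 \<and> Re z < 0)"
proof
  assume "z \<in> semi_upper_half_plane"
  then obtain r t where r: "0<r" "0<t" "t\<le>1" and z: "z = complex_of_real r * exp (\<i> * complex_of_real (pi * t))"
    unfolding semi_upper_half_plane_def by blast
  have e: "exp (\<i> * complex_of_real (pi * t)) = Complex (cos (pi*t)) (sin (pi*t))"
    by (simp add: exp_eq_polar cis.ctr)
  show "0 < Im z \<or> (Im z = 0 \<and> Re z < 0)"
  proof (cases "t = 1")
    case True thus ?thesis using r z e by simp
  next
    case False
    hence "sin (pi*t) > 0" using r by (intro sin_gt_zero) auto
    thus ?thesis using r z e by simp
  qed
next
  assume h: "0 < Im z \<or> (Im z = 0 \<and> Re z < 0)"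
  hence nz: "z \<noteq> 0" by auto
  have a: "0 < Arg z" "Arg z \<le> pi" using h Arg_lt_pi[of z] Arg_eq_pi[of z] Arg_le_pi[of z] pi_gt_zero by auto
  show "z \<in> semi_upper_half_plane" unfolding semi_upper_half_plane_def
    apply (rule CollectI, rule exI[of _ "norm z"], rule exI[of _ "Arg z / pi"])
    using a nz Arg_eq[OF nz] by auto
qed

lemma re_cx: "rev (complexify M z) = M *v rev z"
  by (simp add: rev_def complexify_def vec_eq_iff matrix_vector_mult_def Re_sum)
lemma im_cx: "imv (complexify M z) = M *v imv z"
  by (simp add: imv_def complexify_def vec_eq_iff matrix_vector_mult_def Im_sum)
lemma cx_eq: "z = w \<longleftrightarrow> rev z = rev w \<and> imv z = imv w"
  by (auto simp: rev_def imv_def vec_eq_iff complex_eq_iff)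
lemma cx_comp: "complexify M (complexify N z) = complexify (M ** N) z"
  by (simp add: cx_eq re_cx im_cx matrix_vector_mul_assoc)
lemma cx_id: "complexify (mat 1) z = z"
  by (simp add: cx_eq re_cx im_cx)

lemma hyp_iff: "z \<in> complex_hyperplane a \<longleftrightarrow> a \<bullet> rev z = 0 \<and> a \<bullet> imv z = 0"
  by (simp add: complex_hyperplane_def complex_eq_iff Re_sum Im_sum inner_vec_def rev_def imv_def)

lemma L1: "w \<in> H_plus \<Longrightarrow> eventually (\<lambda>e. imv w - e *\<^sub>R rev w \<in> pos_orthant) (at_right (0::real))"
proof -
  assume w: "w \<in> H_plus"
  have "\<forall>j. eventually (\<lambda>e. 0 < Im (w$j) - e * Re (w$j)) (at_right (0::real))"
  proof
    fix j
    have h: "0 < Im (w$j) \<or> (Im (w$j) = 0 \<and> Re (w$j) < 0)" using w suhp_iff H_plus_def by auto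
    show "eventually (\<lambda>e. 0 < Im (w$j) - e * Re (w$j)) (at_right (0::real))"
    proof (cases "0 < Im (w$j)")
      case True
      have "((\<lambda>e. Im (w$j) - e * Re (w$j)) \<longlongrightarrow> Im (w$j) - 0 * Re (w$j)) (at_right (0::real))"
        by (intro tendsto_intros)
      thus ?thesis using True order_tendstoD(1) by fastforce
    next
      case False
      hence "Im (w$j) = 0 \<and> Re (w$j) < 0" using h by auto
      thus ?thesis by (auto simp: eventually_at_right_field intro!: exI[of _ 1] mult_pos_neg)
    qed
  qed
  hence "eventually (\<lambda>e. \<forall>j. 0 < Im (w$j) - e * Re (w$j)) (at_right (0::real))"
    by (simp add: eventually_all_finite)
  thus ?thesis by (auto simp: pos_orthant_def imv_def rev_def elim!: eventually_mono)
qed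

lemma L2: assumes "0 < e0" "\<forall>e. 0<e \<and> e<e0 \<longrightarrow> imv w - e *\<^sub>R rev w \<in> pos_orthant"
  shows "w \<in> H_plus"
  unfolding H_plus_def
proof (rule CollectI, rule allI)
  fix j
  have p: "\<And>e. 0<e \<Longrightarrow> e<e0 \<Longrightarrow> 0 < Im (w$j) - e * Re (w$j)"
    using assms(2) by (auto simp: pos_orthant_def imv_def rev_def)
  have "((\<lambda>e. Im (w$j) - e * Re (w$j)) \<longlongrightarrow> Im (w$j) - 0 * Re (w$j)) (at_right (0::real))"
    by (intro tendsto_intros)
  moreover have "eventually (\<lambda>e. 0 \<le> Im (w$j) - e * Re (w$j)) (at_right (0::real))"
    unfolding eventually_at_right_field using assms(1) p less_imp_le by blast
  ultimately have "0 \<le> Im (w$j)" using tendsto_lowerbound[of _ _ "at_right (0::real)"] by fastforce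
  moreover have "0 < Im (w$j) - (e0/2) * Re (w$j)" using p[of "e0/2"] assms(1) by auto
  ultimately have "0 < Im (w$j) \<or> (Im (w$j) = 0 \<and> Re (w$j) < 0)"
    using assms(1) by (auto simp: zero_less_mult_iff mult_less_0_iff)
  thus "w $ j \<in> semi_upper_half_plane" using suhp_iff by auto
qed

lemma cx_inv: assumes "M ** B = mat 1" shows "\<exists>w. z = complexify M w \<and> rev w = B *v rev z \<and> imv w = B *v imv z"
  using assms by (intro exI[of _ "complexify B z"]) (simp add: cx_comp cx_id re_cx im_cx)

theorem proposition3p10:
  fixes Mut0 :: "'l set"
    and phi :: "'l \<Rightarrow> real^'n^'n"
    and A :: "(real^'n) set"
  assumes A_finite: "finite A"
    and A_nonzero: "\<forall>a\<in>A. a \<noteq> 0"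
    and A_simplicial: "simplicial_arrangement A"
    and phi_iso: "\<forall>L\<in>Mut0. invertible (phi L)"
    and chambers_eq: "(\<lambda>L. (\<lambda>x. phi L *v x) ` pos_orthant) ` Mut0 = chambers A"
    and chambers_inj: "inj_on (\<lambda>L. (\<lambda>x. phi L *v x) ` pos_orthant) Mut0"
  shows "UNIV - (\<Union>a\<in>A. complex_hyperplane a) = (\<Union>L\<in>Mut0. complexify (phi L) ` H_plus)
         \<and> disjoint_family_on (\<lambda>L. complexify (phi L) ` H_plus) Mut0"
proof -
  define S where "S = UNIV - (\<Union>a\<in>A. real_hyperplane a)"
  define C where "C = (\<lambda>L. (\<lambda>x. phi L *v x) ` pos_orthant)"
  have Ccomp: "L \<in> Mut0 \<Longrightarrow> C L \<in> components S" for L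
    using chambers_eq unfolding C_def S_def chambers_def by blast
  have CS: "L \<in> Mut0 \<Longrightarrow> C L \<subseteq> S" for L using Ccomp in_components_subset by blast
  have ev: "L \<in> Mut0 \<Longrightarrow> w \<in> H_plus \<Longrightarrow>
     eventually (\<lambda>e. imv (complexify (phi L) w) - e *\<^sub>R rev (complexify (phi L) w) \<in> C L) (at_right (0::real))" for L w
  proof -
    assume "L \<in> Mut0" "w \<in> H_plus"
    show ?thesis using L1[OF \<open>w \<in> H_plus\<close>]
    proof (rule eventually_mono)
      fix e assume "imv w - e *\<^sub>R rev w \<in> pos_orthant"
      hence "phi L *v (imv w - e *\<^sub>R rev w) \<in> C L" unfolding C_def by blast
      thus "imv (complexify (phi L) w) - e *\<^sub>R rev (complexify (phi L) w) \<in> C L"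
        by (simp add: re_cx im_cx algebra_simps)
    qed
  qed
  have sub1: "(\<Union>L\<in>Mut0. complexify (phi L) ` H_plus) \<subseteq> UNIV - (\<Union>a\<in>A. complex_hyperplane a)"
  proof safe
    fix L w a assume L: "L \<in> Mut0" and w: "w \<in> H_plus" and a: "a \<in> A"
      and h: "complexify (phi L) w \<in> complex_hyperplane a"
    obtain e where "imv (complexify (phi L) w) - e *\<^sub>R rev (complexify (phi L) w) \<in> C L"
      using eventually_happens'[OF _ ev[OF L w]] by auto
    hence "imv (complexify (phi L) w) - e *\<^sub>R rev (complexify (phi L) w) \<in> S" using CS[OF L] by auto
    thus False using h a by (auto simp: S_def real_hyperplane_def hyp_iff inner_diff_right)
  qed simp
  have sub2: "UNIV - (\<Union>a\<in>A. complex_hyperplane a) \<subseteq> (\<Union>L\<in>Mut0. complexify (phi L) ` H_plus)"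
  proof
    fix z assume z: "z \<in> UNIV - (\<Union>a\<in>A. complex_hyperplane a)"
    let ?x = "rev z" and ?y = "imv z"
    have "\<forall>a\<in>A. eventually (\<lambda>e. a \<bullet> (?y - e *\<^sub>R ?x) \<noteq> 0) (at_right (0::real))"
    proof
      fix a assume a: "a \<in> A"
      hence nz: "a \<bullet> ?x \<noteq> 0 \<or> a \<bullet> ?y \<noteq> 0" using z hyp_iff by auto
      show "eventually (\<lambda>e. a \<bullet> (?y - e *\<^sub>R ?x) \<noteq> 0) (at_right (0::real))"
      proof (cases "a \<bullet> ?y = 0")
        case True
        thus ?thesis using nz by (auto simp: eventually_at_right_field inner_diff_right intro!: exI[of _ 1])
      next
        case False
        have "((\<lambda>e. a \<bullet> ?y - e * (a \<bullet> ?x)) \<longlongrightarrow> a \<bullet> ?y - 0 * (a \<bullet> ?x)) (at_right (0::real))"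
          by (intro tendsto_intros)
        hence "eventually (\<lambda>e. a \<bullet> ?y - e * (a \<bullet> ?x) \<noteq> 0) (at_right (0::real))"
          using False tendsto_imp_eventually_ne by fastforce
        thus ?thesis by (simp add: inner_diff_right)
      qed
    qed
    hence "eventually (\<lambda>e. \<forall>a\<in>A. a \<bullet> (?y - e *\<^sub>R ?x) \<noteq> 0) (at_right (0::real))"
      using A_finite by (simp add: eventually_ball_finite)
    then obtain e0 where e0: "e0 > 0" "\<And>e. 0 < e \<Longrightarrow> e < e0 \<Longrightarrow> ?y - e *\<^sub>R ?x \<in> S"
      unfolding eventually_at_right_field S_def real_hyperplane_def by auto
    define T where "T = (\<lambda>e. ?y - e *\<^sub>R ?x) ` {0<..<e0}"
    have Tc: "connected T" unfolding T_def
      by (intro connected_continuous_image continuous_intros) auto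
    have TS: "T \<subseteq> S" using e0 T_def by auto
    have p0: "?y - (e0/2) *\<^sub>R ?x \<in> T" using e0 T_def by auto
    have "connected_component_set S (?y - (e0/2) *\<^sub>R ?x) \<in> components S"
      using p0 TS by (auto simp: components_def)
    then obtain L where L: "L \<in> Mut0" and CL: "C L = connected_component_set S (?y - (e0/2) *\<^sub>R ?x)"
      using chambers_eq unfolding C_def S_def chambers_def by (metis (no_types, lifting) imageE)
    have TC: "T \<subseteq> C L" unfolding CL using connected_component_maximal[OF p0 Tc TS] .
    have inv: "invertible (phi L)" using phi_iso L by auto
    then obtain B where B: "phi L ** B = mat 1" "B ** phi L = mat 1" unfolding invertible_def by blast
    obtain w where w: "z = complexify (phi L) w" "rev w = B *v ?x"
      "imv w = B *v ?y" using cx_inv[OF B(1)] by blast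
    have "w \<in> H_plus"
    proof (rule L2[OF e0(1)], intro allI impI)
      fix e :: real assume e: "0 < e \<and> e < e0"
      hence "?y - e *\<^sub>R ?x \<in> T" using T_def by auto
      hence "?y - e *\<^sub>R ?x \<in> C L" using TC by blast
      then obtain p where p: "p \<in> pos_orthant" "?y - e *\<^sub>R ?x = phi L *v p" unfolding C_def by auto
      have "B ** phi L = mat 1" using B by simp
      hence "B *v (?y - e *\<^sub>R ?x) = p" using p
        by (simp add: matrix_vector_mul_assoc)
      thus "imv w - e *\<^sub>R rev w \<in> pos_orthant" using p w by (simp add: algebra_simps)
    qed
    thus "z \<in> (\<Union>L\<in>Mut0. complexify (phi L) ` H_plus)" using L w by auto
  qed
  have disj: "disjoint_family_on (\<lambda>L. complexify (phi L) ` H_plus) Mut0"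
    unfolding disjoint_family_on_def
  proof (intro ballI impI)
    fix L L' assume L: "L \<in> Mut0" and L': "L' \<in> Mut0" and ne: "L \<noteq> L'"
    show "complexify (phi L) ` H_plus \<inter> complexify (phi L') ` H_plus = {}"
    proof (rule ccontr)
      assume "complexify (phi L) ` H_plus \<inter> complexify (phi L') ` H_plus \<noteq> {}"
      then obtain w w' where w: "w \<in> H_plus" "w' \<in> H_plus" and eq: "complexify (phi L) w = complexify (phi L') w'"
        by auto
      have "eventually (\<lambda>e. imv (complexify (phi L) w) - e *\<^sub>R rev (complexify (phi L) w) \<in> C L \<inter> C L') (at_right (0::real))"
        using eventually_conj[OF ev[OF L w(1)] ev[OF L' w(2)]] eq by simp
      then obtain e where "imv (complexify (phi L) w) - e *\<^sub>R rev (complexify (phi L) w) \<in> C L \<inter> C L'"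
        using eventually_happens'[OF trivial_limit_at_right_real] by blast
      hence "C L = C L'" using components_nonoverlap[OF Ccomp[OF L] Ccomp[OF L']] by blast
      thus False using chambers_inj L L' ne unfolding C_def inj_on_def by blast
    qed
  qed
  show ?thesis using sub1 sub2 disj by blast
qed

end
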